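(* Let $f:\mathbb{Z}_+\to[0,\infty)$ be a function with $f(n)\log^2 n\to 0$ as $n\to\infty$. For every $\varepsilon\in(0,1/2)$ there exist $n_0\in\mathbb{Z}_+$ and $\delta=\delta(\varepsilon)>0$ such that the following holds. Let $G$ be a graph with $n\ge n_0$ vertices, $m\ge(1-f(n))n^2/2$ edges, and maximum density $\rho(G)=m/n$. If $$k\ge(1+\delta)\sqrt{\frac{\rho(G)}{\log\rho(G)}},$$ then with probability at least $1-\varepsilon$, $G$ is conflict $\{c_v\}$-colorable for a random local $k$-partition $\{c_v\}$ of $G$.
   Context: For a graph $G$ and vertex $v$, $E(v)$ is the set of edges incident with $v$. A local $k$-partition of $G$ is a collection $\{c_v\}$ of maps $c_v:E(v)\to\{1,\dots,k\}$; $G$ is conflict $\{c_v\}$-colorable if there is $\varphi:V(G)\to\{1,\dots,k\}$ such that no edge $e=xy$ has $\varphi(x)=c_x(e)$ and $\varphi(y)=c_y(e)$. A random local $k$-partition is obtained by choosing, for each edge $e=xy$, the pair $(c_x(e),c_y(e))$ uniformly at random from $[k]^2$, independently over edges. The maximum density is $\rho(G)=\max\{|E(G')|/|V(G')|:\emptyset\ne G'\subseteq G\}$. $\log$ is the natural logarithm. *)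

theory Defs
  imports "HOL-Analysis.Analysis"
begin

definition simple_graph :: "'a set \<Rightarrow> 'a set set \<Rightarrow> bool" where
  "simple_graph V E \<longleftrightarrow> finite V \<and> (\<forall>e\<in>E. e \<subseteq> V \<and> card e = 2)"

text \<open>Incidences (v,e) with v an endpoint of e; a local k-partition is a map on incidences
  (c(v,e) = c_v(e)) into {1..k}.\<close>
definition incidences :: "'a set set \<Rightarrow> ('a \<times> 'a set) set" where
  "incidences E = {(v, e). e \<in> E \<and> v \<in> e}"

definition local_partitions :: "'a set set \<Rightarrow> nat \<Rightarrow> ('a \<times> 'a set \<Rightarrow> nat) set" where
  "local_partitions E k = (incidences E \<rightarrow>\<^sub>E {1..k})"

definition conflict_colorable ::
    "'a set \<Rightarrow> 'a set set \<Rightarrow> nat \<Rightarrow> ('a \<times> 'a set \<Rightarrow> nat) \<Rightarrow> bool" where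
  "conflict_colorable V E k c \<longleftrightarrow>
     (\<exists>\<phi>. (\<forall>v\<in>V. \<phi> v \<in> {1..k}) \<and>
          (\<forall>e\<in>E. \<forall>x y. e = {x, y} \<and> x \<noteq> y \<longrightarrow>
                    \<not> (\<phi> x = c (x, e) \<and> \<phi> y = c (y, e))))"

text \<open>Probability over a uniformly random local k-partition (uniform over all maps on
  incidences, i.e. independent uniform pairs per edge).\<close>
definition prob_colorable :: "'a set \<Rightarrow> 'a set set \<Rightarrow> nat \<Rightarrow> real" where
  "prob_colorable V E k =
     real (card {c \<in> local_partitions E k. conflict_colorable V E k c})
       / real (card (local_partitions E k))"

definition max_density :: "'a set \<Rightarrow> 'a set set \<Rightarrow> real" where
  "max_density V E = Max {real (card E') / real (card V') | V' E'.
      V' \<subseteq> V \<and> V' \<noteq> {} \<and> E' \<subseteq> E \<and> (\<forall>e\<in>E'. e \<subseteq> V')}"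

end

theory Submission
  imports Defs "HOL-Real_Asymp.Real_Asymp"
begin


definition hits :: "'u set \<Rightarrow> ('u \<Rightarrow> nat) \<Rightarrow> ('u \<Rightarrow> nat \<times> nat) \<Rightarrow> nat set" where
  "hits U t z = {snd (z u) | u. u \<in> U \<and> fst (z u) = t u}"

lemma bern: fixes q r :: real assumes "0 \<le> q" "0 \<le> r"
  shows "q^s + real s * q^(s-1) * r \<le> (q+r)^s"
proof (induction s)
  case 0 then show ?case by simp
next
  case (Suc s)
  have "(q+r)^Suc s = (q+r)*(q+r)^s" by simp
  also have "\<dots> \<ge> (q+r)*(q^s + real s * q^(s-1) * r)"
    using Suc assms by (intro mult_left_mono) auto
  finally have h: "(q+r)^Suc s \<ge> (q+r)*(q^s + real s * q^(s-1) * r)" .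
  have "q^Suc s + real (Suc s) * q^(Suc s - 1) * r \<le> (q+r)*(q^s + real s * q^(s-1) * r)"
  proof (cases s)
    case 0 then show ?thesis by simp
  next
    case (Suc t)
    then show ?thesis using assms by (simp add: algebra_simps)
  qed
  then show ?case using h by linarith
qed

lemma card_PiE_insert_filter:
  assumes "w \<notin> U" "finite U" "finite (T w)" "\<And>i. finite (T i)"
  shows "card {b \<in> Pi\<^sub>E (insert w U) T. P b} = (\<Sum>y\<in>T w. card {g \<in> Pi\<^sub>E U T. P (g(w := y))})"
proof -
  have "{b \<in> Pi\<^sub>E (insert w U) T. P b} = (\<lambda>(y, g). g(w := y)) ` (SIGMA y:T w. {g \<in> Pi\<^sub>E U T. P (g(w := y))})"
    unfolding PiE_insert_eq by auto
  moreover have "inj_on (\<lambda>(y, g). g(w := y)) (SIGMA y:T w. {g \<in> Pi\<^sub>E U T. P (g(w := y))})"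
    by (rule inj_on_subset[OF inj_combinator[OF assms(1)]]) auto
  ultimately have "card {b \<in> Pi\<^sub>E (insert w U) T. P b} = card (SIGMA y:T w. {g \<in> Pi\<^sub>E U T. P (g(w := y))})"
    by (simp add: card_image)
  also have "\<dots> = (\<Sum>y\<in>T w. card {g \<in> Pi\<^sub>E U T. P (g(w := y))})"
    using assms by (intro card_SigmaI) (auto intro: finite_subset[OF _ finite_PiE[of U T]])
  finally show ?thesis .
qed

lemma hits_upd:
  assumes "w \<notin> U"
  shows "hits (insert w U) t (g(w := y)) = hits U t g \<union> (if fst y = t w then {snd y} else {})"
  using assms unfolding hits_def by auto

definition qq :: "nat \<Rightarrow> nat \<Rightarrow> real" where
  "qq k d = 1 - (1 - 1 / real k ^ 2) ^ d"

lemma qq_nonneg: "k \<ge> 1 \<Longrightarrow> 0 \<le> qq k d"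
proof -
  assume k: "k \<ge> 1"
  have "0 \<le> 1 - 1 / real k ^ 2" "1 - 1 / real k ^ 2 \<le> 1" using k by (auto simp: field_simps)
  then have "(1 - 1 / real k ^ 2) ^ d \<le> 1" by (rule power_le_one)
  then show ?thesis unfolding qq_def by simp
qed

lemma qq_Suc: "qq k (Suc d) = qq k d + (1 - qq k d) / real k ^ 2"
  unfolding qq_def by (simp add: field_simps)

lemma qq_le1: "k \<ge> 1 \<Longrightarrow> qq k d \<le> 1"
  unfolding qq_def using zero_le_power[of "1 - 1 / real k ^ 2" d]
  by (simp add: field_simps)

lemma qq_mono: "k \<ge> 1 \<Longrightarrow> d \<le> d' \<Longrightarrow> qq k d \<le> qq k d'"
proof -
  assume k: "k \<ge> 1" and d: "d \<le> d'"
  have "0 \<le> 1 - 1 / real k ^ 2" "1 - 1 / real k ^ 2 \<le> 1" using k by (auto simp: field_simps)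
  then have "(1 - 1 / real k ^ 2) ^ d' \<le> (1 - 1 / real k ^ 2) ^ d"
    using d by (intro power_decreasing) auto
  then show ?thesis unfolding qq_def by simp
qed


lemma coupon_step_arith:
  fixes M q kk s :: real
  assumes "0 \<le> M" "0 \<le> q" "q \<le> 1" "kk \<ge> 1" "s \<ge> 0"
  shows "kk * M * q^n + real n * M * (q^(n-1) - q^n) \<le> kk * M * (q + (1 - q) / kk)^n"
proof -
  have "q^n + real n * q^(n-1) * ((1-q)/kk) \<le> (q + (1-q)/kk)^n"
    using assms by (intro bern) auto
  then have "kk * M * (q^n + real n * q^(n-1) * ((1-q)/kk)) \<le> kk * M * (q + (1-q)/kk)^n"
    using assms by (intro mult_left_mono) auto
  moreover have "kk * M * (q^n + real n * q^(n-1) * ((1-q)/kk)) = kk * M * q^n + real n * M * (q^(n-1) - q^n)"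
  proof (cases n)
    case 0 then show ?thesis by simp
  next
    case (Suc m) then show ?thesis using assms by (simp add: field_simps)
  qed
  ultimately show ?thesis by simp
qed

lemma coupon:
  assumes "finite U" "k \<ge> 1"
  shows "\<forall>S. S \<subseteq> {1..k} \<longrightarrow> real (card {z \<in> Pi\<^sub>E U (\<lambda>_. {1..k}\<times>{1..k}). S \<subseteq> hits U t z})
           \<le> real k^(2*card U) * qq k (card U) ^ card S"
  using assms(1)
proof induction
  case empty
  show ?case
  proof (intro allI impI)
    fix S :: "nat set" assume "S \<subseteq> {1..k}"
    have sub: "{z \<in> Pi\<^sub>E {} (\<lambda>_. {1..k}\<times>{1..k}). S \<subseteq> hits {} t z} \<subseteq> {\<lambda>_. undefined}"
      unfolding PiE_empty_domain by blast
    have c1: "card {z \<in> Pi\<^sub>E {} (\<lambda>_. {1..k}\<times>{1..k}). S \<subseteq> hits {} t z} \<le> 1"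
      using card_mono[OF finite.insertI[OF finite.emptyI] sub] by simp
    have c2: "S \<noteq> {} \<Longrightarrow> {z \<in> Pi\<^sub>E {} (\<lambda>_. {1..k}\<times>{1..k}). S \<subseteq> hits {} t z} = {}"
    proof -
      have "hits {} t z = {}" for z unfolding hits_def by simp
      then show "S \<noteq> {} \<Longrightarrow> ?thesis" by blast
    qed
    show "real (card {z \<in> Pi\<^sub>E {} (\<lambda>_. {1..k}\<times>{1..k}). S \<subseteq> hits {} t z})
           \<le> real k^(2*card ({}::'a set)) * qq k (card ({}::'a set)) ^ card S"
    proof (cases "S = {}")
      case True then show ?thesis using c1 by (simp add: qq_def)
    next
      case False then show ?thesis by (subst c2[OF False]) (simp add: qq_def)
    qed
  qed
next
  case (insert w U)
  define K where "K = {1..k}"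
  define M where "M = real k^(2*card U)"
  define q where "q = qq k (card U)"
  have M0: "0 \<le> M" unfolding M_def by simp
  have q0: "0 \<le> q" "q \<le> 1" unfolding q_def using qq_nonneg qq_le1 assms(2) by auto
  show ?case
  proof (intro allI impI)
    fix S assume S: "S \<subseteq> {1..k}"
    define s where "s = card S"
    have finS: "finite S" using S finite_subset by blast
    define X where "X y = (if fst y = t w then {snd y} else ({}::nat set))" for y :: "nat \<times> nat"
    have "card {z \<in> Pi\<^sub>E (insert w U) (\<lambda>_. K\<times>K). S \<subseteq> hits (insert w U) t z}
        = (\<Sum>y\<in>K\<times>K. card {g \<in> Pi\<^sub>E U (\<lambda>_. K\<times>K). S \<subseteq> hits (insert w U) t (g(w := y))})"
      by (rule card_PiE_insert_filter) (use insert(1,2) in \<open>auto simp: K_def\<close>)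
    also have "\<dots> = (\<Sum>y\<in>K\<times>K. card {g \<in> Pi\<^sub>E U (\<lambda>_. K\<times>K). S - X y \<subseteq> hits U t g})"
      by (intro sum.cong refl arg_cong[where f=card] Collect_cong conj_cong) (auto simp: hits_upd[OF insert(2)] X_def)
    finally have eq: "real (card {z \<in> Pi\<^sub>E (insert w U) (\<lambda>_. K\<times>K). S \<subseteq> hits (insert w U) t z})
        = (\<Sum>y\<in>K\<times>K. real (card {g \<in> Pi\<^sub>E U (\<lambda>_. K\<times>K). S - X y \<subseteq> hits U t g}))" by simp
    also have "\<dots> \<le> (\<Sum>y\<in>K\<times>K. M * q ^ card (S - X y))"
    proof (rule sum_mono)
      fix y
      have "S - X y \<subseteq> {1..k}" using S by blast
      then show "real (card {g \<in> Pi\<^sub>E U (\<lambda>_. K\<times>K). S - X y \<subseteq> hits U t g}) \<le> M * q ^ card (S - X y)"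
        using insert(3) unfolding M_def q_def K_def by blast
    qed
    also have "\<dots> = (\<Sum>y\<in>K\<times>K. M * q^s + (if y \<in> {t w} \<times> S then M * (q^(s-1) - q^s) else 0))"
    proof (intro sum.cong refl)
      fix y assume "y \<in> K\<times>K"
      show "M * q ^ card (S - X y) = M * q^s + (if y \<in> {t w} \<times> S then M * (q^(s-1) - q^s) else 0)"
      proof (cases "y \<in> {t w} \<times> S")
        case True
        then have "S - X y = S - {snd y}" "snd y \<in> S" by (auto simp: X_def)
        then show ?thesis using True finS by (simp add: s_def algebra_simps)
      next
        case False
        then have "S - X y = S" by (cases y) (auto simp: X_def)
        then show ?thesis using False by (simp add: s_def)
      qed
    qed
    also have "\<dots> = real (card (K\<times>K)) * (M * q^s) + real (card ((K\<times>K) \<inter> ({t w} \<times> S))) * (M * (q^(s-1) - q^s))"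
      by (simp add: sum.distrib sum.inter_restrict[symmetric] K_def)
    finally have bound: "real (card {z \<in> Pi\<^sub>E (insert w U) (\<lambda>_. K\<times>K). S \<subseteq> hits (insert w U) t z})
       \<le> real (card (K\<times>K)) * (M * q^s) + real (card ((K\<times>K) \<inter> ({t w} \<times> S))) * (M * (q^(s-1) - q^s))" .
    have cK: "real (card (K\<times>K)) = real k ^ 2" by (simp add: K_def card_cartesian_product power2_eq_square)
    have q': "qq k (card (insert w U)) = q + (1 - q) / real k ^ 2"
      using insert(1,2) by (simp add: q_def qq_Suc)
    have RHS: "real k ^ (2 * card (insert w U)) = real k ^ 2 * M"
      using insert(1,2) by (simp add: M_def power_add power2_eq_square)
    have qle: "q \<le> q + (1 - q) / real k ^ 2" using q0 by simp
    show "real (card {z \<in> Pi\<^sub>E (insert w U) (\<lambda>_. {1..k}\<times>{1..k}). S \<subseteq> hits (insert w U) t z})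
           \<le> real k^(2*card (insert w U)) * qq k (card (insert w U)) ^ card S"
    proof (cases "t w \<in> K")
      case True
      then have "(K\<times>K) \<inter> ({t w} \<times> S) = {t w} \<times> S" using S K_def by auto
      then have c2: "real (card ((K\<times>K) \<inter> ({t w} \<times> S))) = real s" by (simp add: s_def card_cartesian_product)
      have "real k ^ 2 * M * q^s + real s * M * (q^(s-1) - q^s) \<le> real k ^ 2 * M * (q + (1 - q) / real k ^ 2)^s"
        using M0 q0 assms(2) by (intro coupon_step_arith) auto
      then show ?thesis using bound cK c2 q' RHS K_def s_def by (simp add: mult.assoc power2_eq_square)
    next
      case False
      then have "(K\<times>K) \<inter> ({t w} \<times> S) = {}" by auto
      then have "real (card {z \<in> Pi\<^sub>E (insert w U) (\<lambda>_. K\<times>K). S \<subseteq> hits (insert w U) t z}) \<le> real k ^ 2 * M * q^s"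
        using bound cK by (simp add: mult.assoc)
      also have "\<dots> \<le> real k ^ 2 * M * (q + (1 - q) / real k ^ 2)^s"
        using M0 q0 qle by (intro mult_left_mono power_mono) auto
      finally show ?thesis using q' RHS K_def s_def by simp
    qed
  qed
qed



definition Forb :: "nat set set \<Rightarrow> (nat \<times> nat set \<Rightarrow> nat) \<Rightarrow> (nat \<Rightarrow> nat) \<Rightarrow> nat \<Rightarrow> nat set" where
  "Forb E c \<phi> v = {c (v, {u, v}) | u. u < v \<and> {u, v} \<in> E \<and> \<phi> u = c (u, {u, v})}"

definition pick :: "nat set set \<Rightarrow> nat \<Rightarrow> (nat \<times> nat set \<Rightarrow> nat) \<Rightarrow> (nat \<Rightarrow> nat) \<Rightarrow> nat \<Rightarrow> nat" where
  "pick E k c \<phi> v = (if \<exists>a\<in>{1..k}. a \<notin> Forb E c \<phi> v then LEAST a. a \<in> {1..k} \<and> a \<notin> Forb E c \<phi> v else 1)"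

primrec gr :: "nat set set \<Rightarrow> nat \<Rightarrow> (nat \<times> nat set \<Rightarrow> nat) \<Rightarrow> nat \<Rightarrow> nat \<Rightarrow> nat" where
  "gr E k c 0 = (\<lambda>_. 0)"
| "gr E k c (Suc w) = (gr E k c w)(w := pick E k c (gr E k c w) w)"

lemma gr_stable: "u < w \<Longrightarrow> gr E k c w u = gr E k c (Suc u) u"
proof (induction w)
  case 0 then show ?case by simp
next
  case (Suc w)
  show ?case
  proof (cases "u = w")
    case True then show ?thesis by simp
  next
    case False
    then have "u < w" using Suc.prems by simp
    then have "gr E k c w u = gr E k c (Suc u) u" by (rule Suc.IH)
    moreover have "gr E k c (Suc w) u = gr E k c w u"
      unfolding gr.simps(2)[of E k c w] using False by (rule fun_upd_other)
    ultimately show ?thesis by simp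
  qed
qed

lemma pick_ok: "\<exists>a\<in>{1..k}. a \<notin> Forb E c \<phi> v \<Longrightarrow> pick E k c \<phi> v \<in> {1..k} \<and> pick E k c \<phi> v \<notin> Forb E c \<phi> v"
proof -
  assume h: "\<exists>a\<in>{1..k}. a \<notin> Forb E c \<phi> v"
  then have "\<exists>a. a \<in> {1..k} \<and> a \<notin> Forb E c \<phi> v" by blast
  from LeastI_ex[OF this] h show ?thesis unfolding pick_def by simp
qed

lemma greedy_ok:
  assumes sg: "simple_graph V E"
    and ok: "\<forall>v\<in>V. \<exists>a\<in>{1..k}. a \<notin> Forb E c (gr E k c v) v"
  shows "conflict_colorable V E k c"
proof -
  have finV: "finite V" using sg unfolding simple_graph_def by auto
  define N where "N = Suc (Max (insert 0 V))"
  have vN: "v < N" if "v \<in> V" for v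
    using that finV unfolding N_def by (simp add: le_imp_less_Suc)
  define \<phi> where "\<phi> = gr E k c N"
  have phi_v: "\<phi> v = pick E k c (gr E k c v) v" if "v \<in> V" for v
    unfolding \<phi>_def gr_stable[OF vN[OF that]] gr.simps(2) by (rule fun_upd_same)
  have col: "\<phi> v \<in> {1..k}" "\<phi> v \<notin> Forb E c (gr E k c v) v" if "v \<in> V" for v
    using pick_ok[OF ok[rule_format, OF that]] phi_v[OF that] by auto
  have noconf: False if xy: "x < y" "{x,y} \<in> E" "\<phi> x = c (x, {x,y})" "\<phi> y = c (y, {x,y})" for x y
  proof -
    have V: "x \<in> V" "y \<in> V" using sg xy(2) unfolding simple_graph_def by auto
    have G: "gr E k c y x = \<phi> x"
      using gr_stable[OF xy(1)] gr_stable[OF vN[OF V(1)]] unfolding \<phi>_def by (simp only:)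
    have "c (y, {x,y}) \<in> Forb E c (gr E k c y) y"
      unfolding Forb_def using xy(1,2,3) G by (intro CollectI exI[of _ x]) simp
    then show False using col(2)[OF V(2)] xy(4) by simp
  qed
  show ?thesis
    unfolding conflict_colorable_def
  proof (intro exI[of _ \<phi>] conjI ballI allI impI)
    fix v assume "v \<in> V" then show "\<phi> v \<in> {1..k}" using col by blast
  next
    fix e x y assume e: "e \<in> E" "e = {x, y} \<and> x \<noteq> y"
    show "\<not> (\<phi> x = c (x, e) \<and> \<phi> y = c (y, e))"
    proof
      assume h: "\<phi> x = c (x, e) \<and> \<phi> y = c (y, e)"
      show False
      proof (cases "x < y")
        case True then show False using noconf[of x y] e h by auto
      next
        case False
        then have "y < x" using e by auto
        moreover have "{y,x} = e" using e by auto
        ultimately show False using noconf[of y x] e h by auto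
      qed
    qed
  qed
qed

lemma gr_local:
  assumes "\<And>x e. e \<in> E \<Longrightarrow> e \<subseteq> {..<v} \<Longrightarrow> x \<in> e \<Longrightarrow> c (x, e) = c' (x, e)"
  shows "w \<le> v \<Longrightarrow> gr E k c w = gr E k c' w"
proof (induction w)
  case 0 then show ?case by simp
next
  case (Suc w)
  then have IH: "gr E k c w = gr E k c' w" by simp
  have F: "Forb E c \<phi> w = Forb E c' \<phi> w" for \<phi>
  proof -
    have "c (x, {u, w}) = c' (x, {u, w})" if "u < w" "{u,w} \<in> E" "x \<in> {u,w}" for u x
      using assms[of "{u,w}" x] that Suc(2) by auto
    then show ?thesis unfolding Forb_def by (intro Collect_cong) (metis insertI1 insertI2)
  qed
  have "pick E k c \<phi> w = pick E k c' \<phi> w" for \<phi> unfolding pick_def F ..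
  then show ?case using IH by simp
qed



definition mrg :: "'i set \<Rightarrow> ('i \<Rightarrow> 'b) \<Rightarrow> ('i \<Rightarrow> 'b) \<Rightarrow> 'i \<Rightarrow> 'b" where
  "mrg A a b = (\<lambda>i. if i \<in> A then a i else b i)"

lemma card_PiE_split:
  assumes "finite A" "finite B" "A \<inter> B = {}" "finite S"
  shows "card {c \<in> Pi\<^sub>E (A \<union> B) (\<lambda>_. S). P c}
       = (\<Sum>a\<in>Pi\<^sub>E A (\<lambda>_. S). card {b \<in> Pi\<^sub>E B (\<lambda>_. S). P (mrg A a b)})"
proof -
  let ?f = "\<lambda>(a,b). mrg A a b"
  let ?Sig = "SIGMA a:Pi\<^sub>E A (\<lambda>_. S). {b \<in> Pi\<^sub>E B (\<lambda>_. S). P (mrg A a b)}"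
  have img: "{c \<in> Pi\<^sub>E (A \<union> B) (\<lambda>_. S). P c} = ?f ` ?Sig"
  proof (intro equalityI subsetI)
    fix c assume c: "c \<in> {c \<in> Pi\<^sub>E (A \<union> B) (\<lambda>_. S). P c}"
    have eq: "mrg A (restrict c A) (restrict c B) = c"
    proof
      fix i show "mrg A (restrict c A) (restrict c B) i = c i"
        using c by (cases "i \<in> A"; cases "i \<in> B") (auto simp: mrg_def PiE_def extensional_def)
    qed
    have "(restrict c A, restrict c B) \<in> ?Sig" using c eq by auto
    then show "c \<in> ?f ` ?Sig" using eq by (intro image_eqI[of _ _ "(restrict c A, restrict c B)"]) auto
  next
    fix c assume "c \<in> ?f ` ?Sig"
    then obtain a b where ab: "a \<in> Pi\<^sub>E A (\<lambda>_. S)" "b \<in> Pi\<^sub>E B (\<lambda>_. S)" "P (mrg A a b)" "c = mrg A a b" by auto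
    have "mrg A a b \<in> Pi\<^sub>E (A \<union> B) (\<lambda>_. S)"
      using ab(1,2) by (auto simp: mrg_def PiE_def Pi_def extensional_def)
    then show "c \<in> {c \<in> Pi\<^sub>E (A \<union> B) (\<lambda>_. S). P c}" using ab by auto
  qed
  have inj: "inj_on ?f ?Sig"
  proof (rule inj_onI, clarify)
    fix a b a' b'
    assume h: "a \<in> Pi\<^sub>E A (\<lambda>_. S)" "b \<in> Pi\<^sub>E B (\<lambda>_. S)" "a' \<in> Pi\<^sub>E A (\<lambda>_. S)" "b' \<in> Pi\<^sub>E B (\<lambda>_. S)"
      "mrg A a b = mrg A a' b'"
    have "a = a'"
    proof
      fix i show "a i = a' i"
      proof (cases "i \<in> A")
        case True
        have "a i = mrg A a b i" "a' i = mrg A a' b' i" using True unfolding mrg_def by simp_all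
        then show ?thesis using h(5) by simp
      next
        case False then show ?thesis using PiE_arb[OF h(1) False] PiE_arb[OF h(3) False] by simp
      qed
    qed
    moreover have "b = b'"
    proof
      fix i show "b i = b' i"
      proof (cases "i \<in> B")
        case True then have "i \<notin> A" using assms(3) by auto
        have "b i = mrg A a b i" "b' i = mrg A a' b' i" using \<open>i \<notin> A\<close> unfolding mrg_def by simp_all
        then show ?thesis using h(5) by simp
      next
        case False then show ?thesis using PiE_arb[OF h(2) False] PiE_arb[OF h(4) False] by simp
      qed
    qed
    ultimately show "a = a' \<and> b = b'" by simp
  qed
  have "card {c \<in> Pi\<^sub>E (A \<union> B) (\<lambda>_. S). P c} = card ?Sig"
    unfolding img using inj by (rule card_image)
  also have "\<dots> = (\<Sum>a\<in>Pi\<^sub>E A (\<lambda>_. S). card {b \<in> Pi\<^sub>E B (\<lambda>_. S). P (mrg A a b)})"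
    using assms by (intro card_SigmaI) (auto intro: finite_subset[OF _ finite_PiE[of B "\<lambda>_. S"]] finite_PiE)
  finally show ?thesis .
qed

lemma bij_betw_filter_card:
  assumes "bij_betw f X Y"
  shows "card {x \<in> X. P (f x)} = card {y \<in> Y. P y}"
proof -
  have "bij_betw f {x \<in> X. P (f x)} {y \<in> Y. P y}"
    using assms unfolding bij_betw_def inj_on_def by auto
  then show ?thesis by (rule bij_betw_same_card)
qed



definition Uset :: "nat set set \<Rightarrow> nat \<Rightarrow> nat set" where
  "Uset E v = {u. u < v \<and> {u, v} \<in> E}"

definition Bset :: "nat set set \<Rightarrow> nat \<Rightarrow> (nat \<times> nat set) set" where
  "Bset E v = (\<lambda>u. (u, {u, v})) ` Uset E v \<union> (\<lambda>u. (v, {u, v})) ` Uset E v"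

definition Phi :: "nat set set \<Rightarrow> nat \<Rightarrow> (nat \<times> nat set \<Rightarrow> nat) \<Rightarrow> nat \<Rightarrow> nat \<times> nat" where
  "Phi E v b = restrict (\<lambda>u. (b (u, {u, v}), b (v, {u, v}))) (Uset E v)"

definition Psi :: "nat set set \<Rightarrow> nat \<Rightarrow> (nat \<Rightarrow> nat \<times> nat) \<Rightarrow> nat \<times> nat set \<Rightarrow> nat" where
  "Psi E v z = restrict (\<lambda>i. if fst i = v then snd (z (Min (snd i))) else fst (z (fst i))) (Bset E v)"

lemma Min_pair: "u < (v::nat) \<Longrightarrow> Min {u, v} = u"
  by (simp add: min_def)

lemma bij_Phi: "bij_betw (Phi E v) (Pi\<^sub>E (Bset E v) (\<lambda>_. K)) (Pi\<^sub>E (Uset E v) (\<lambda>_. K \<times> K))"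
proof (rule bij_betw_byWitness[where f' = "Psi E v"])
  show "\<forall>b\<in>Pi\<^sub>E (Bset E v) (\<lambda>_. K). Psi E v (Phi E v b) = b"
  proof
    fix b assume b: "b \<in> Pi\<^sub>E (Bset E v) (\<lambda>_. K)"
    show "Psi E v (Phi E v b) = b"
    proof
      fix i show "Psi E v (Phi E v b) i = b i"
      proof (cases "i \<in> Bset E v")
        case True
        then obtain u where u: "u \<in> Uset E v" "i = (u, {u, v}) \<or> i = (v, {u, v})"
          unfolding Bset_def by blast
        have uv: "u < v" using u(1) unfolding Uset_def by simp
        show ?thesis
        proof (cases "i = (u, {u, v})")
          case True
          then show ?thesis using uv u(1) True \<open>i \<in> Bset E v\<close> unfolding Psi_def Phi_def by simp
        next
          case False
          then have i: "i = (v, {u, v})" using u(2) by simp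
          then show ?thesis using uv u(1) \<open>i \<in> Bset E v\<close> Min_pair[OF uv] unfolding Psi_def Phi_def by simp
        qed
      next
        case False
        then show ?thesis using PiE_arb[OF b False] unfolding Psi_def by simp
      qed
    qed
  qed
next
  show "\<forall>z\<in>Pi\<^sub>E (Uset E v) (\<lambda>_. K \<times> K). Phi E v (Psi E v z) = z"
  proof
    fix z assume z: "z \<in> Pi\<^sub>E (Uset E v) (\<lambda>_. K \<times> K)"
    show "Phi E v (Psi E v z) = z"
    proof
      fix u show "Phi E v (Psi E v z) u = z u"
      proof (cases "u \<in> Uset E v")
        case True
        have uv: "u < v" using True unfolding Uset_def by simp
        have B: "(u, {u, v}) \<in> Bset E v" "(v, {u, v}) \<in> Bset E v" using True unfolding Bset_def by auto
        show ?thesis using True B uv Min_pair[OF uv] unfolding Psi_def Phi_def by simp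
      next
        case False
        then show ?thesis using PiE_arb[OF z False] unfolding Phi_def by simp
      qed
    qed
  qed
next
  show "Phi E v ` Pi\<^sub>E (Bset E v) (\<lambda>_. K) \<subseteq> Pi\<^sub>E (Uset E v) (\<lambda>_. K \<times> K)"
  proof
    fix z assume "z \<in> Phi E v ` Pi\<^sub>E (Bset E v) (\<lambda>_. K)"
    then obtain b where b: "b \<in> Pi\<^sub>E (Bset E v) (\<lambda>_. K)" "z = Phi E v b" by blast
    have "b (u, {u, v}) \<in> K" "b (v, {u, v}) \<in> K" if "u \<in> Uset E v" for u
      using b(1) that unfolding Bset_def by auto
    then show "z \<in> Pi\<^sub>E (Uset E v) (\<lambda>_. K \<times> K)" unfolding b(2) Phi_def by auto
  qed
next
  show "Psi E v ` Pi\<^sub>E (Uset E v) (\<lambda>_. K \<times> K) \<subseteq> Pi\<^sub>E (Bset E v) (\<lambda>_. K)"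
  proof
    fix b assume "b \<in> Psi E v ` Pi\<^sub>E (Uset E v) (\<lambda>_. K \<times> K)"
    then obtain z where z: "z \<in> Pi\<^sub>E (Uset E v) (\<lambda>_. K \<times> K)" "b = Psi E v z" by blast
    have "(if fst i = v then snd (z (Min (snd i))) else fst (z (fst i))) \<in> K" if iB: "i \<in> Bset E v" for i
    proof -
      obtain u where u: "u \<in> Uset E v" "i = (u, {u, v}) \<or> i = (v, {u, v})"
        using iB unfolding Bset_def by blast
      have uv: "u < v" using u(1) unfolding Uset_def by simp
      have zu: "z u \<in> K \<times> K" using z(1) u(1) by auto
      show ?thesis using u(2) uv zu Min_pair[OF uv] by (auto simp: mem_Times_iff)
    qed
    then show "b \<in> Pi\<^sub>E (Bset E v) (\<lambda>_. K)" unfolding z(2) Psi_def by auto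
  qed
qed


lemma card_PiE_const: "finite S \<Longrightarrow> card (Pi\<^sub>E S (\<lambda>_. K)) = card K ^ card S"
  by (simp add: card_PiE)

lemma fail_bound:
  assumes sg: "simple_graph V E" and k: "k \<ge> 1"
  shows "real (card {c \<in> local_partitions E k. {1..k} \<subseteq> Forb E c (gr E k c v) v})
           \<le> real (card (local_partitions E k)) * qq k (card V) ^ k"
proof -
  define K where "K = {1..k}"
  define I where "I = incidences E"
  define B where "B = Bset E v"
  define A where "A = I - B"
  define U where "U = Uset E v"
  have finV: "finite V" and EV: "\<And>e. e \<in> E \<Longrightarrow> e \<subseteq> V"
    using sg unfolding simple_graph_def by auto
  have finE: "finite E" using finite_subset[of E "Pow V"] EV finV by blast
  have "I \<subseteq> V \<times> E" unfolding I_def incidences_def using EV by auto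
  then have finI: "finite I" using finV finE finite_subset by blast
  have BI: "B \<subseteq> I" unfolding B_def Bset_def I_def incidences_def Uset_def by auto
  have IAB: "I = A \<union> B" and disj: "A \<inter> B = {}" using BI unfolding A_def by auto
  have finA: "finite A" and finB: "finite B" using finI BI unfolding A_def by (auto intro: finite_subset)
  have finK: "finite K" unfolding K_def by simp
  have cK: "card K = k" unfolding K_def by simp
  have UV: "U \<subseteq> V" unfolding U_def Uset_def using EV by auto
  have finU: "finite U" using UV finV finite_subset by blast
  have LP: "local_partitions E k = Pi\<^sub>E (A \<union> B) (\<lambda>_. K)"
    unfolding local_partitions_def K_def IAB[unfolded I_def, symmetric] ..
  have Bv: "v \<in> snd i" if "i \<in> B" for i using that unfolding B_def Bset_def by auto
  have grloc: "gr E k (mrg A a b) v = gr E k a v" for a b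
  proof (rule gr_local)
    fix x e assume e: "e \<in> E" "e \<subseteq> {..<v}" "x \<in> e"
    have "(x, e) \<in> I" unfolding I_def incidences_def using e by auto
    moreover have "(x, e) \<notin> B" using Bv[of "(x,e)"] e(2) by auto
    ultimately show "mrg A a b (x, e) = a (x, e)" unfolding mrg_def A_def by simp
  qed simp
  have Forb_eq: "Forb E (mrg A a b) \<phi> v = hits U \<phi> (Phi E v b)" for a b \<phi>
  proof -
    have m: "mrg A a b (v, {u, v}) = b (v, {u, v})" "mrg A a b (u, {u, v}) = b (u, {u, v})"
      "Phi E v b u = (b (u, {u, v}), b (v, {u, v}))" if "u \<in> U" for u
    proof -
      have "(v, {u, v}) \<in> B" "(u, {u, v}) \<in> B" using that unfolding B_def Bset_def U_def by auto
      then show "mrg A a b (v, {u, v}) = b (v, {u, v})" "mrg A a b (u, {u, v}) = b (u, {u, v})"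
        unfolding mrg_def A_def by auto
      show "Phi E v b u = (b (u, {u, v}), b (v, {u, v}))" using that unfolding Phi_def U_def by simp
    qed
    have U: "u \<in> U \<longleftrightarrow> u < v \<and> {u, v} \<in> E" for u unfolding U_def Uset_def by simp
    show ?thesis
    proof (intro equalityI subsetI)
      fix x assume "x \<in> Forb E (mrg A a b) \<phi> v"
      then obtain u where u: "x = mrg A a b (v, {u, v})" "u < v" "{u, v} \<in> E" "\<phi> u = mrg A a b (u, {u, v})"
        unfolding Forb_def by blast
      have uU: "u \<in> U" using u U by blast
      show "x \<in> hits U \<phi> (Phi E v b)"
        unfolding hits_def using u m[OF uU] uU by (intro CollectI exI[of _ u]) simp
    next
      fix x assume "x \<in> hits U \<phi> (Phi E v b)"
      then obtain u where u: "x = snd (Phi E v b u)" "u \<in> U" "fst (Phi E v b u) = \<phi> u"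
        unfolding hits_def by blast
      show "x \<in> Forb E (mrg A a b) \<phi> v"
        unfolding Forb_def using u m[OF u(2)] U[of u] by (intro CollectI exI[of _ u]) simp
    qed
  qed
  define q where "q = qq k (card V)"
  have q0: "0 \<le> q" using qq_nonneg k unfolding q_def by simp
  have cPB: "card (Pi\<^sub>E B (\<lambda>_. K)) = k ^ (2 * card U)"
  proof -
    have "card (Pi\<^sub>E B (\<lambda>_. K)) = card (Pi\<^sub>E U (\<lambda>_. K \<times> K))"
      using bij_Phi unfolding B_def U_def by (rule bij_betw_same_card)
    also have "\<dots> = (k * k) ^ card U" using finU cK by (simp add: card_PiE_const card_cartesian_product)
    finally show ?thesis by (simp add: power_mult power2_eq_square)
  qed
  have inner: "real (card {b \<in> Pi\<^sub>E B (\<lambda>_. K). K \<subseteq> Forb E (mrg A a b) (gr E k (mrg A a b) v) v})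
      \<le> real (card (Pi\<^sub>E B (\<lambda>_. K))) * q ^ k" for a
  proof -
    define t where "t = gr E k a v"
    have "card {b \<in> Pi\<^sub>E B (\<lambda>_. K). K \<subseteq> Forb E (mrg A a b) (gr E k (mrg A a b) v) v}
        = card {b \<in> Pi\<^sub>E B (\<lambda>_. K). K \<subseteq> hits U t (Phi E v b)}"
      unfolding grloc Forb_eq t_def ..
    also have "\<dots> = card {z \<in> Pi\<^sub>E U (\<lambda>_. K \<times> K). K \<subseteq> hits U t z}"
      using bij_Phi unfolding B_def U_def by (rule bij_betw_filter_card)
    finally have eq: "card {b \<in> Pi\<^sub>E B (\<lambda>_. K). K \<subseteq> Forb E (mrg A a b) (gr E k (mrg A a b) v) v}
        = card {z \<in> Pi\<^sub>E U (\<lambda>_. K \<times> K). K \<subseteq> hits U t z}" .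
    have "real (card {z \<in> Pi\<^sub>E U (\<lambda>_. K \<times> K). K \<subseteq> hits U t z}) \<le> real k^(2*card U) * qq k (card U) ^ card K"
      using coupon[OF finU k, of t, rule_format, of K] unfolding K_def by simp
    also have "\<dots> \<le> real k^(2*card U) * q ^ k"
      unfolding cK q_def using qq_mono[OF k card_mono[OF finV UV]] qq_nonneg[OF k]
      by (intro mult_left_mono power_mono) auto
    finally show ?thesis using eq cPB by simp
  qed
  have "card {c \<in> local_partitions E k. {1..k} \<subseteq> Forb E c (gr E k c v) v}
      = (\<Sum>a\<in>Pi\<^sub>E A (\<lambda>_. K). card {b \<in> Pi\<^sub>E B (\<lambda>_. K). K \<subseteq> Forb E (mrg A a b) (gr E k (mrg A a b) v) v})"
    unfolding LP K_def[symmetric] by (rule card_PiE_split[OF finA finB disj finK])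
  then have "real (card {c \<in> local_partitions E k. {1..k} \<subseteq> Forb E c (gr E k c v) v})
      = (\<Sum>a\<in>Pi\<^sub>E A (\<lambda>_. K). real (card {b \<in> Pi\<^sub>E B (\<lambda>_. K). K \<subseteq> Forb E (mrg A a b) (gr E k (mrg A a b) v) v}))"
    by simp
  also have "\<dots> \<le> (\<Sum>a\<in>Pi\<^sub>E A (\<lambda>_. K). real (card (Pi\<^sub>E B (\<lambda>_. K))) * q ^ k)"
    by (rule sum_mono) (rule inner)
  also have "\<dots> = real (card (Pi\<^sub>E A (\<lambda>_. K))) * real (card (Pi\<^sub>E B (\<lambda>_. K))) * q ^ k"
    by simp
  also have "\<dots> = real (card (local_partitions E k)) * q ^ k"
  proof -
    have "card (local_partitions E k) = card K ^ card (A \<union> B)"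
      unfolding LP using finA finB by (simp add: card_PiE_const)
    also have "\<dots> = card K ^ card A * card K ^ card B"
      using finA finB disj by (simp add: card_Un_disjoint power_add)
    finally show ?thesis using finA finB by (simp add: card_PiE_const)
  qed
  finally show ?thesis unfolding q_def .
qed



lemma finite_incidences:
  assumes sg: "simple_graph V E" shows "finite (incidences E)"
proof -
  have finV: "finite V" and EV: "\<And>e. e \<in> E \<Longrightarrow> e \<subseteq> V"
    using sg unfolding simple_graph_def by auto
  have finE: "finite E" using finite_subset[of E "Pow V"] EV finV by blast
  have "incidences E \<subseteq> V \<times> E" unfolding incidences_def using EV by auto
  then show ?thesis using finV finE finite_subset by blast
qed

lemma main_prob:
  fixes V :: "nat set" and E :: "nat set set"
  assumes sg: "simple_graph V E" and k: "k \<ge> 1"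
  shows "prob_colorable V E k \<ge> 1 - real (card V) * qq k (card V) ^ k"
proof -
  define \<Omega> where "\<Omega> = local_partitions E k"
  define K where "K = {1..k}"
  define q where "q = qq k (card V)"
  have finV: "finite V" using sg unfolding simple_graph_def by auto
  have fin\<Omega>: "finite \<Omega>" unfolding \<Omega>_def local_partitions_def
    using finite_incidences[OF sg] by (intro finite_PiE) auto
  have "(\<lambda>i\<in>incidences E. 1) \<in> \<Omega>" unfolding \<Omega>_def local_partitions_def using k by auto
  then have ne: "\<Omega> \<noteq> {}" by blast
  then have cpos: "card \<Omega> > 0" using fin\<Omega> by (simp add: card_gt_0_iff)
  define Bad where "Bad = {c \<in> \<Omega>. \<not> conflict_colorable V E k c}"
  have BadU: "Bad \<subseteq> (\<Union>v\<in>V. {c \<in> \<Omega>. K \<subseteq> Forb E c (gr E k c v) v})"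
  proof
    fix c assume c: "c \<in> Bad"
    then have "\<not> (\<forall>v\<in>V. \<exists>a\<in>{1..k}. a \<notin> Forb E c (gr E k c v) v)"
      using greedy_ok[OF sg] unfolding Bad_def by blast
    then obtain v where "v \<in> V" "K \<subseteq> Forb E c (gr E k c v) v" unfolding K_def by blast
    then show "c \<in> (\<Union>v\<in>V. {c \<in> \<Omega>. K \<subseteq> Forb E c (gr E k c v) v})" using c unfolding Bad_def by blast
  qed
  have "card Bad \<le> card (\<Union>v\<in>V. {c \<in> \<Omega>. K \<subseteq> Forb E c (gr E k c v) v})"
    using BadU fin\<Omega> by (intro card_mono) (auto intro: finite_subset[OF _ fin\<Omega>])
  also have "\<dots> \<le> (\<Sum>v\<in>V. card {c \<in> \<Omega>. K \<subseteq> Forb E c (gr E k c v) v})"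
    using finV by (rule card_UN_le)
  finally have "real (card Bad) \<le> real (\<Sum>v\<in>V. card {c \<in> \<Omega>. K \<subseteq> Forb E c (gr E k c v) v})"
    by (rule of_nat_mono)
  also have "\<dots> = (\<Sum>v\<in>V. real (card {c \<in> \<Omega>. K \<subseteq> Forb E c (gr E k c v) v}))"
    by (rule of_nat_sum)
  also have "\<dots> \<le> (\<Sum>v\<in>V. real (card \<Omega>) * q ^ k)"
    by (rule sum_mono) (unfold \<Omega>_def K_def q_def, rule fail_bound[OF sg k])
  also have "\<dots> = real (card V) * real (card \<Omega>) * q ^ k" by simp
  finally have bad: "real (card Bad) \<le> real (card V) * real (card \<Omega>) * q ^ k" .
  have good: "{c \<in> \<Omega>. conflict_colorable V E k c} = \<Omega> - Bad" unfolding Bad_def by auto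
  have "card (\<Omega> - Bad) = card \<Omega> - card Bad"
    by (rule card_Diff_subset) (use fin\<Omega> in \<open>auto simp: Bad_def intro: finite_subset\<close>)
  moreover have "card Bad \<le> card \<Omega>" unfolding Bad_def using fin\<Omega> by (intro card_mono) auto
  ultimately have "real (card (\<Omega> - Bad)) = real (card \<Omega>) - real (card Bad)" by simp
  then have "prob_colorable V E k = (real (card \<Omega>) - real (card Bad)) / real (card \<Omega>)"
    unfolding prob_colorable_def \<Omega>_def[symmetric] good by simp
  also have "\<dots> = 1 - real (card Bad) / real (card \<Omega>)" using cpos by (simp add: field_simps)
  also have "\<dots> \<ge> 1 - real (card V) * q ^ k"
  proof -
    have "real (card Bad) / real (card \<Omega>) \<le> real (card V) * q ^ k"
      using bad cpos by (simp add: divide_le_eq mult.commute mult.left_commute)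
    then show ?thesis by simp
  qed
  finally show ?thesis unfolding q_def .
qed



lemma asym0: "(\<lambda>n::nat. real n * exp (-(4 * sqrt (real n / ln (real n))) * real n powr (-1/8))) \<longlonglongrightarrow> 0"
  by real_asymp

lemma asym_bound:
  assumes n3: "n \<ge> 3" and kk: "real k \<ge> 4 * sqrt (real n / ln (real n))"
  shows "real n * qq k n ^ k \<le> real n * exp (-(4 * sqrt (real n / ln (real n))) * real n powr (-1/8))"
proof -
  define K0 where "K0 = 4 * sqrt (real n / ln (real n))"
  have ln1: "ln (real n) \<ge> 1"
  proof -
    have "exp 1 \<le> (3::real)" using exp_le by simp
    also have "\<dots> \<le> real n" using n3 by simp
    finally show ?thesis using ln_le_cancel_iff[of "exp 1" "real n"] using n3 by simp
  qed
  have lnn: "ln (real n) < real n" using ln_less_self[of "real n"] n3 by simp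
  have r0: "real n / ln (real n) \<ge> 1" using ln1 lnn by simp
  have K0sq: "K0^2 = 16 * (real n / ln (real n))" unfolding K0_def using r0 by (simp add: power_mult_distrib)
  have K0pos: "K0 \<ge> 4" unfolding K0_def using r0 by simp
  have kK: "real k \<ge> K0" using kk K0_def by simp
  have k2: "real k ^ 2 \<ge> 16 * (real n / ln (real n))"
    using K0sq kK K0pos power_mono[of K0 "real k" 2] by simp
  define p where "p = 1 / real k ^ 2"
  have kpos: "real k ^ 2 \<ge> 16" using k2 r0 by simp
  have p0: "0 \<le> p" and p12: "p \<le> 1/2" unfolding p_def using kpos by (auto simp: divide_le_eq)
  have pn: "real n * p \<le> ln (real n) / 16"
  proof -
    have "real n * p = real n / real k ^ 2" unfolding p_def by simp
    also have "\<dots> \<le> real n / (16 * (real n / ln (real n)))"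
    proof -
      have pos: "0 < real k ^ 2 * (16 * (real n / ln (real n)))" using kpos r0 by (intro mult_pos_pos) linarith+
      show ?thesis by (rule divide_left_mono[OF k2 _ pos]) simp
    qed
    also have "\<dots> = ln (real n) / 16" using n3 ln1 by (simp add: field_simps)
    finally show ?thesis .
  qed
  have lnp: "ln (1 - p) \<ge> - 2 * p"
  proof -
    have "p * (2 * p) \<le> p * 1" using p0 p12 by (intro mult_left_mono) auto
    then have "2 * p\<^sup>2 \<le> p" by (simp add: power2_eq_square)
    then show ?thesis using ln_one_minus_pos_lower_bound[OF p0 p12] by linarith
  qed
  define y where "y = (1 - p) ^ n"
  have y: "y = exp (real n * ln (1 - p))"
  proof -
    have pp: "1 - p > 0" using p12 by linarith
    have "y = exp (ln ((1 - p) ^ n))" unfolding y_def using pp by simp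
    also have "ln ((1 - p) ^ n) = real n * ln (1 - p)" by (rule ln_realpow)
    finally show ?thesis .
  qed
  have "real n * ln (1 - p) \<ge> - (ln (real n) / 8)"
  proof -
    have "real n * ln (1 - p) \<ge> real n * (- 2 * p)" using lnp by (intro mult_left_mono) auto
    then show ?thesis using pn by linarith
  qed
  then have "y \<ge> exp (- (ln (real n) / 8))" unfolding y by simp
  also have "exp (- (ln (real n) / 8)) = real n powr (-1/8)" using n3 by (simp add: powr_def)
  finally have ylow: "y \<ge> real n powr (-1/8)" .
  have y1: "y \<le> 1" unfolding y_def using p0 p12 by (intro power_le_one) auto
  have qqy: "qq k n = 1 - y" unfolding qq_def y_def p_def by simp
  have "qq k n ^ k \<le> exp (- y) ^ k"
    unfolding qqy using y1 by (intro power_mono) (auto simp: add.commute[of 1] exp_ge_add_one_self[of "-y", simplified])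
  also have "\<dots> = exp (- (real k * y))" by (simp add: exp_of_nat_mult[symmetric])
  also have "\<dots> \<le> exp (-(K0 * real n powr (-1/8)))"
  proof -
    have "K0 * real n powr (-1/8) \<le> real k * y"
      using kK ylow K0pos by (intro mult_mono) auto
    then show ?thesis by simp
  qed
  finally have "qq k n ^ k \<le> exp (-(K0 * real n powr (-1/8)))" .
  then show ?thesis unfolding K0_def by (intro mult_left_mono) auto
qed

lemma asym:
  assumes "\<epsilon> > 0"
  shows "\<exists>N. \<forall>n\<ge>N. \<forall>k::nat. real k \<ge> 4 * sqrt (real n / ln (real n)) \<longrightarrow> real n * qq k n ^ k \<le> \<epsilon>"
proof -
  have "eventually (\<lambda>n. real n * exp (-(4 * sqrt (real n / ln (real n))) * real n powr (-1/8)) < \<epsilon>) sequentially"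
    using order_tendstoD(2)[OF asym0 assms] .
  then obtain N where N: "\<And>n. n \<ge> N \<Longrightarrow> real n * exp (-(4 * sqrt (real n / ln (real n))) * real n powr (-1/8)) < \<epsilon>"
    unfolding eventually_sequentially by blast
  show ?thesis
  proof (intro exI[of _ "max N 3"] allI impI)
    fix n k assume n: "n \<ge> max N 3" and k: "real k \<ge> 4 * sqrt (real n / ln (real n))"
    have "real n * qq k n ^ k \<le> real n * exp (-(4 * sqrt (real n / ln (real n))) * real n powr (-1/8))"
      using asym_bound[of n k] n k by simp
    also have "\<dots> < \<epsilon>" using N n by simp
    finally show "real n * qq k n ^ k \<le> \<epsilon>" by simp
  qed
qed



lemma card_E_le:
  assumes sg: "simple_graph V E" shows "card E \<le> card V ^ 2"
proof -
  have finV: "finite V" using sg unfolding simple_graph_def by auto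
  have "E \<subseteq> {B. B \<subseteq> V \<and> card B = 2}" using sg unfolding simple_graph_def by auto
  then have "card E \<le> card {B. B \<subseteq> V \<and> card B = 2}"
    using finV by (intro card_mono) (auto intro: finite_subset[of _ "Pow V"])
  also have "\<dots> = card V choose 2" using n_subsets[OF finV] .
  also have "\<dots> \<le> card V ^ 2"
  proof (cases "2 \<le> card V")
    case True then show ?thesis by (rule binomial_le_pow)
  next
    case False then have "card V choose 2 = 0" by (intro binomial_eq_0) simp
    then show ?thesis by (metis zero_le)
  qed
  finally show ?thesis .
qed

theorem theorem3p9:
  fixes f :: "nat \<Rightarrow> real"
  assumes f_nonneg: "\<forall>n>0. f n \<ge> 0"
    and f_lim: "(\<lambda>n. f n * (ln (real n))^2) \<longlonglongrightarrow> 0"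
  shows "\<forall>\<epsilon>::real. 0 < \<epsilon> \<and> \<epsilon> < 1/2 \<longrightarrow>
    (\<exists>n0::nat. n0 \<ge> 1 \<and> (\<exists>\<delta>::real. \<delta> > 0 \<and>
      (\<forall>(V::nat set) (E::nat set set) (k::nat).
         simple_graph V E \<and> card V \<ge> n0 \<and>
         real (card E) \<ge> (1 - f (card V)) * real (card V)^2 / 2 \<and>
         max_density V E = real (card E) / real (card V) \<and>
         real k \<ge> (1 + \<delta>) * sqrt (max_density V E / ln (max_density V E))
         \<longrightarrow> prob_colorable V E k \<ge> 1 - \<epsilon>)))"
proof (intro allI impI)
  fix \<epsilon> :: real assume eps: "0 < \<epsilon> \<and> \<epsilon> < 1/2"
  obtain N1 where N1: "\<And>n k. n \<ge> N1 \<Longrightarrow> real k \<ge> 4 * sqrt (real n / ln (real n)) \<Longrightarrow> real n * qq k n ^ k \<le> \<epsilon>"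
    using asym[of \<epsilon>] eps by blast
  have "eventually (\<lambda>n. f n * (ln (real n))^2 < 1/2) sequentially"
    using order_tendstoD(2)[OF f_lim, of "1/2"] by simp
  then obtain N2 where N2: "\<And>n. n \<ge> N2 \<Longrightarrow> f n * (ln (real n))^2 < 1/2"
    unfolding eventually_sequentially by blast
  define n0 where "n0 = max (max N1 N2) 5"
  show "\<exists>n0::nat. n0 \<ge> 1 \<and> (\<exists>\<delta>::real. \<delta> > 0 \<and>
      (\<forall>(V::nat set) (E::nat set set) (k::nat).
         simple_graph V E \<and> card V \<ge> n0 \<and>
         real (card E) \<ge> (1 - f (card V)) * real (card V)^2 / 2 \<and>
         max_density V E = real (card E) / real (card V) \<and>
         real k \<ge> (1 + \<delta>) * sqrt (max_density V E / ln (max_density V E))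
         \<longrightarrow> prob_colorable V E k \<ge> 1 - \<epsilon>))"
  proof (intro exI[of _ n0] conjI exI[of _ "7::real"] allI impI)
    show "n0 \<ge> 1" unfolding n0_def by simp
    show "(0::real) < 7" by simp
    fix V :: "nat set" and E :: "nat set set" and k :: nat
    assume h: "simple_graph V E \<and> card V \<ge> n0 \<and>
         real (card E) \<ge> (1 - f (card V)) * real (card V)^2 / 2 \<and>
         max_density V E = real (card E) / real (card V) \<and>
         real k \<ge> (1 + 7) * sqrt (max_density V E / ln (max_density V E))"
    define n where "n = card V"
    define m where "m = card E"
    define \<rho> where "\<rho> = max_density V E"
    have sg: "simple_graph V E" using h by blast
    have nN: "n \<ge> N1" "n \<ge> N2" "n \<ge> 5" using h unfolding n_def n0_def by auto
    have mlow: "real m \<ge> (1 - f n) * real n ^ 2 / 2" using h unfolding m_def n_def by blast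
    have rho: "\<rho> = real m / real n" using h unfolding \<rho>_def m_def n_def by blast
    have kk: "real k \<ge> 8 * sqrt (\<rho> / ln \<rho>)"
      using h[THEN conjunct2, THEN conjunct2, THEN conjunct2, THEN conjunct2] unfolding \<rho>_def by simp
    have npos: "real n > 0" using nN by simp
    have ln1: "ln (real n) \<ge> 1"
    proof -
      have "exp 1 \<le> (3::real)" using exp_le by simp
      also have "\<dots> \<le> real n" using nN by simp
      finally show ?thesis using ln_le_cancel_iff[of "exp 1" "real n"] npos by simp
    qed
    have fn: "f n \<le> 1/2"
    proof -
      have f0: "f n \<ge> 0" using f_nonneg npos by simp
      have "(ln (real n))^2 \<ge> 1" using ln1 by (simp add: one_le_power)
      then have "f n * 1 \<le> f n * (ln (real n))^2" using f0 by (intro mult_left_mono) auto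
      then show ?thesis using N2[OF nN(2)] by simp
    qed
    have m4: "real m \<ge> real n ^ 2 / 4"
    proof -
      have "(1/2) * real n ^ 2 / 2 \<le> (1 - f n) * real n ^ 2 / 2" using fn by (intro divide_right_mono mult_right_mono) auto
      then show ?thesis using mlow by simp
    qed
    have rlow: "\<rho> \<ge> real n / 4"
    proof -
      have "real n / 4 = (real n ^ 2 / 4) / real n" using npos by (simp add: power2_eq_square)
      also have "\<dots> \<le> real m / real n" using m4 npos by (intro divide_right_mono) auto
      finally show ?thesis using rho by simp
    qed
    have rup: "\<rho> \<le> real n"
    proof -
      have "real m \<le> real n ^ 2" using card_E_le[OF sg] unfolding m_def n_def by (simp flip: of_nat_power)
      then have "real m / real n \<le> real n ^ 2 / real n" using npos by (intro divide_right_mono) auto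
      then show ?thesis using rho npos by (simp add: power2_eq_square)
    qed
    have r1: "\<rho> > 1" using rlow nN by simp
    have lnr: "ln \<rho> > 0" using r1 by simp
    have lnrn: "ln \<rho> \<le> ln (real n)" using rup r1 by simp
    have "(real n / 4) / ln (real n) \<le> \<rho> / ln \<rho>"
      using rlow lnr lnrn npos by (intro frac_le) auto
    then have "sqrt ((real n / 4) / ln (real n)) \<le> sqrt (\<rho> / ln \<rho>)" by (rule real_sqrt_le_mono)
    moreover have "sqrt ((real n / 4) / ln (real n)) = sqrt (real n / ln (real n)) / 2"
    proof -
      have "(real n / 4) / ln (real n) = (real n / ln (real n)) / 4" by simp
      moreover have "sqrt 4 = (2::real)" by (simp add: real_sqrt_eq_iff)
      ultimately show ?thesis by (simp only: real_sqrt_divide)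
    qed
    ultimately have k4: "real k \<ge> 4 * sqrt (real n / ln (real n))" using kk by linarith
    have "real n / ln (real n) > 0" using npos ln1 by (intro divide_pos_pos) linarith+
    then have "sqrt (real n / ln (real n)) > 0" by simp
    then have k1: "k \<ge> 1" using k4 by (cases k) auto
    have "prob_colorable V E k \<ge> 1 - real n * qq k n ^ k"
      using main_prob[OF sg k1] unfolding n_def .
    moreover have "real n * qq k n ^ k \<le> \<epsilon>" using N1[OF nN(1) k4] .
    ultimately show "prob_colorable V E k \<ge> 1 - \<epsilon>" by simp
  qed
qed


end
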